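(* For any SCC $F:\Theta\to 2^Z\setminus\{\emptyset\}$ the following are equivalent: (i) $F$ is pure-Nash-implementable; (ii) $F$ is mixed-Nash-A-implementable; (iii) $F$ is mixed-Nash-B-implementable.
   Context: Standing setup: $\mathcal I=\{1,\dots,I\}$ finite, $I\ge 3$; $\Theta$ finite or countably infinite; $Z$ finite; $Y=\Delta(Z)$; $u_i^\theta:Z\to\mathbb R$, $U_i^\theta(y)=\sum_z y_zu_i^\theta(z)$. A mechanism $\mathcal M=\langle M=\times_iM_i,g:M\to Y\rangle$ has countable $M_i$; $g(\lambda)$ is the lottery induced by a profile $\lambda$; $PNE^{(\mathcal M,\theta)}$, $MNE^{(\mathcal M,\theta)}$ are the sets of pure and mixed Nash equilibria at $\theta$. $F$ is pure-Nash-implementable if some $\mathcal M$ satisfies $\bigcup_{\lambda\in PNE^{(\mathcal M,\theta)}}\mathrm{SUPP}(g[\lambda])=F(\theta)$ for all $\theta$; mixed-Nash-A-implementable if some $\mathcal M$ satisfies $\bigcup_{\lambda\in MNE^{(\mathcal M,\theta)}}\mathrm{SUPP}(g[\lambda])=F(\theta)$ for all $\theta$; mixed-Nash-B-implementable if some $\mathcal M$ satisfies $\bigcup_{\lambda\in MNE^{(\mathcal M,\theta)}}\mathrm{SUPP}(g[\lambda])=\bigcup_{\lambda\in PNE^{(\mathcal M,\theta)}}\mathrm{SUPP}(g[\lambda])=F(\theta)$ for all $\theta$. *)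

theory Defs
  imports "HOL-Probability.Product_PMF"
begin

(* Agents: a finite type 'i (|I| = CARD('i)); states: countable type 'th;
   outcomes: finite type 'z; lotteries Y = Delta(Z): 'z pmf.
   A mechanism is a pair (Msg, g): Msg i :: nat set is the (countable) message
   set of agent i, g maps message profiles to lotteries. *)

definition U :: "('z::finite \<Rightarrow> real) \<Rightarrow> 'z pmf \<Rightarrow> real" where
  "U v y = (\<Sum>z\<in>UNIV. pmf y z * v z)"

definition outcome :: "(('i::finite \<Rightarrow> nat) \<Rightarrow> 'z pmf) \<Rightarrow> ('i \<Rightarrow> nat pmf) \<Rightarrow> 'z pmf" where
  "outcome g str = bind_pmf (Pi_pmf UNIV undefined str) g"

definition is_PNE ::
  "('i::finite \<Rightarrow> nat set) \<Rightarrow> (('i \<Rightarrow> nat) \<Rightarrow> 'z::finite pmf) \<Rightarrow> ('i \<Rightarrow> 'th \<Rightarrow> 'z \<Rightarrow> real)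
    \<Rightarrow> 'th \<Rightarrow> ('i \<Rightarrow> nat) \<Rightarrow> bool" where
  "is_PNE Msg g u \<theta> m \<longleftrightarrow>
     (\<forall>i. m i \<in> Msg i) \<and>
     (\<forall>i. \<forall>m'\<in>Msg i. U (u i \<theta>) (g (m(i := m'))) \<le> U (u i \<theta>) (g m))"

definition is_MNE ::
  "('i::finite \<Rightarrow> nat set) \<Rightarrow> (('i \<Rightarrow> nat) \<Rightarrow> 'z::finite pmf) \<Rightarrow> ('i \<Rightarrow> 'th \<Rightarrow> 'z \<Rightarrow> real)
    \<Rightarrow> 'th \<Rightarrow> ('i \<Rightarrow> nat pmf) \<Rightarrow> bool" where
  "is_MNE Msg g u \<theta> str \<longleftrightarrow>
     (\<forall>i. set_pmf (str i) \<subseteq> Msg i) \<and>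
     (\<forall>i \<mu>. set_pmf \<mu> \<subseteq> Msg i \<longrightarrow>
        U (u i \<theta>) (outcome g (str(i := \<mu>))) \<le> U (u i \<theta>) (outcome g str))"

definition PNE_outcomes ::
  "('i::finite \<Rightarrow> nat set) \<Rightarrow> (('i \<Rightarrow> nat) \<Rightarrow> 'z::finite pmf) \<Rightarrow> ('i \<Rightarrow> 'th \<Rightarrow> 'z \<Rightarrow> real)
    \<Rightarrow> 'th \<Rightarrow> 'z set" where
  "PNE_outcomes Msg g u \<theta> = (\<Union>m\<in>{m. is_PNE Msg g u \<theta> m}. set_pmf (g m))"

definition MNE_outcomes ::
  "('i::finite \<Rightarrow> nat set) \<Rightarrow> (('i \<Rightarrow> nat) \<Rightarrow> 'z::finite pmf) \<Rightarrow> ('i \<Rightarrow> 'th \<Rightarrow> 'z \<Rightarrow> real)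
    \<Rightarrow> 'th \<Rightarrow> 'z set" where
  "MNE_outcomes Msg g u \<theta> = (\<Union>s\<in>{s. is_MNE Msg g u \<theta> s}. set_pmf (outcome g s))"

definition pure_Nash_implementable ::
  "('i::finite \<Rightarrow> 'th \<Rightarrow> 'z::finite \<Rightarrow> real) \<Rightarrow> ('th \<Rightarrow> 'z set) \<Rightarrow> bool" where
  "pure_Nash_implementable u F \<longleftrightarrow>
     (\<exists>(Msg :: 'i \<Rightarrow> nat set) g. \<forall>\<theta>. PNE_outcomes Msg g u \<theta> = F \<theta>)"

definition mixed_Nash_A_implementable ::
  "('i::finite \<Rightarrow> 'th \<Rightarrow> 'z::finite \<Rightarrow> real) \<Rightarrow> ('th \<Rightarrow> 'z set) \<Rightarrow> bool" where
  "mixed_Nash_A_implementable u F \<longleftrightarrow>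
     (\<exists>(Msg :: 'i \<Rightarrow> nat set) g. \<forall>\<theta>. MNE_outcomes Msg g u \<theta> = F \<theta>)"

definition mixed_Nash_B_implementable ::
  "('i::finite \<Rightarrow> 'th \<Rightarrow> 'z::finite \<Rightarrow> real) \<Rightarrow> ('th \<Rightarrow> 'z set) \<Rightarrow> bool" where
  "mixed_Nash_B_implementable u F \<longleftrightarrow>
     (\<exists>(Msg :: 'i \<Rightarrow> nat set) g. \<forall>\<theta>.
        MNE_outcomes Msg g u \<theta> = F \<theta> \<and> PNE_outcomes Msg g u \<theta> = F \<theta>)"

end

theory Submission
  imports Defs
begin


definition Ubd :: "('z::finite \<Rightarrow> real) \<Rightarrow> real" where
  "Ubd v = (\<Sum>z\<in>UNIV. \<bar>v z\<bar>)"

lemma U_bound: "\<bar>U v y\<bar> \<le> Ubd v"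
proof -
  have "\<bar>U v y\<bar> \<le> (\<Sum>z\<in>UNIV. \<bar>pmf y z * v z\<bar>)"
    unfolding U_def by (rule sum_abs)
  also have "\<dots> \<le> (\<Sum>z\<in>UNIV. \<bar>v z\<bar>)"
    by (intro sum_mono) (auto simp: abs_mult intro!: mult_left_le_one_le pmf_le_1)
  finally show ?thesis by (simp add: Ubd_def)
qed

lemma integrable_U [simp, intro]: "integrable (measure_pmf p) (\<lambda>x. U v (f x))"
  by (intro measure_pmf.integrable_const_bound[where B="Ubd v"]) (auto intro: U_bound)

lemma U_bind: "U v (bind_pmf p f) = measure_pmf.expectation p (\<lambda>x. U v (f x))"
proof -
  have "U v (bind_pmf p f) = (\<Sum>z\<in>UNIV. (\<integral>x. pmf (f x) z * v z \<partial>measure_pmf p))"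
    unfolding U_def pmf_bind by simp
  also have "\<dots> = (\<integral>x. (\<Sum>z\<in>UNIV. pmf (f x) z * v z) \<partial>measure_pmf p)"
    by (subst Bochner_Integration.integral_sum)
       (auto intro!: integrable_mult_left measure_pmf.integrable_const_bound[where B=1] simp: pmf_le_1)
  finally show ?thesis by (simp add: U_def)
qed

lemma U_return: "U v (return_pmf y) = v y"
  by (simp add: U_def indicator_def)

lemma Pi_upd: fixes \<rho> :: "'a::finite \<Rightarrow> 'b pmf" shows "Pi_pmf UNIV d (\<rho>(j := \<mu>)) =
   bind_pmf \<mu> (\<lambda>y. map_pmf (\<lambda>x. x(j := y)) (Pi_pmf UNIV d \<rho>))"
proof -
  have U: "(UNIV :: 'a set) = insert j (UNIV - {j})" by auto
  have "Pi_pmf UNIV d (\<rho>(j := \<mu>)) = Pi_pmf (insert j (UNIV - {j})) d (\<rho>(j := \<mu>))"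
    using U by simp
  also have "\<dots> = do {y \<leftarrow> \<mu>; f \<leftarrow> Pi_pmf (UNIV - {j}) d (\<rho>(j := \<mu>)); return_pmf (f(j := y))}"
    by (subst Pi_pmf_insert') auto
  also have "Pi_pmf (UNIV - {j}) d (\<rho>(j := \<mu>)) = Pi_pmf (UNIV - {j}) d \<rho>"
    by (intro Pi_pmf_cong) auto
  also have "\<dots> = map_pmf (\<lambda>f. f(j := d)) (Pi_pmf UNIV d \<rho>)"
    by (rule Pi_pmf_remove) simp
  finally show ?thesis
    by (simp add: map_pmf_def bind_assoc_pmf bind_return_pmf fun_upd_upd del: fun_upd_apply)
qed

lemma outcome_upd: "U v (outcome g (\<rho>(j := \<mu>))) =
  measure_pmf.expectation \<mu> (\<lambda>y. measure_pmf.expectation (Pi_pmf UNIV undefined \<rho>) (\<lambda>x. U v (g (x(j:=y)))))"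
  unfolding outcome_def Pi_upd by (simp add: U_bind map_pmf_def bind_assoc_pmf bind_return_pmf)

lemma outcome_upd_return: "U v (outcome g (\<rho>(j := return_pmf y))) =
  measure_pmf.expectation (Pi_pmf UNIV undefined \<rho>) (\<lambda>x. U v (g (x(j:=y))))"
  by (simp add: outcome_upd)



lemma expectation_le_const:
  fixes f :: "'a \<Rightarrow> real"
  assumes "\<And>y. y \<in> set_pmf \<mu> \<Longrightarrow> f y \<le> c" "integrable (measure_pmf \<mu>) f"
  shows "measure_pmf.expectation \<mu> f \<le> c"
  using assms by (intro measure_pmf.integral_le_const) (auto simp: AE_measure_pmf_iff)

lemma integrable_E_U [simp, intro]:
  "integrable (measure_pmf \<mu>) (\<lambda>y. measure_pmf.expectation P (\<lambda>x. U v (f x y)))"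
proof (intro measure_pmf.integrable_const_bound[where B="Ubd v"])
  show "AE y in measure_pmf \<mu>. norm (measure_pmf.expectation P (\<lambda>x. U v (f x y))) \<le> Ubd v"
  proof (intro AE_pmfI)
    fix y
    have "norm (measure_pmf.expectation P (\<lambda>x. U v (f x y))) \<le> measure_pmf.expectation P (\<lambda>x. norm (U v (f x y)))"
      by (rule integral_norm_bound)
    also have "\<dots> \<le> Ubd v" by (rule expectation_le_const) (auto intro: U_bound simp: measure_pmf.integrable_const_bound[where B="Ubd v"])
    finally show "norm (measure_pmf.expectation P (\<lambda>x. U v (f x y))) \<le> Ubd v" .
  qed
qed simp

lemma outcome_return: "outcome g (\<lambda>i. return_pmf (m i)) = g (m :: 'i::finite \<Rightarrow> nat)"
  unfolding outcome_def by (simp add: bind_return_pmf)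

lemma PNE_MNE:
  assumes "is_PNE Msg g u \<theta> m"
  shows "is_MNE Msg g u \<theta> (\<lambda>i. return_pmf (m i))"
  unfolding is_MNE_def
proof (intro conjI allI impI)
  fix i show "set_pmf (return_pmf (m i)) \<subseteq> Msg i" using assms by (auto simp: is_PNE_def)
next
  fix i \<mu> assume mu: "set_pmf \<mu> \<subseteq> Msg i"
  have "U (u i \<theta>) (outcome g ((\<lambda>i. return_pmf (m i))(i := \<mu>))) =
     measure_pmf.expectation \<mu> (\<lambda>y. U (u i \<theta>) (g (m(i := y))))"
    by (simp add: outcome_upd bind_return_pmf)
  also have "\<dots> \<le> U (u i \<theta>) (g m)"
    using mu assms by (intro expectation_le_const) (auto simp: is_PNE_def)
  finally show "U (u i \<theta>) (outcome g ((\<lambda>i. return_pmf (m i))(i := \<mu>)))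
        \<le> U (u i \<theta>) (outcome g (\<lambda>i. return_pmf (m i)))"
    by (simp add: outcome_return)
qed

lemma MNE_support:
  assumes "is_MNE Msg g u \<theta> \<rho>" "y \<in> set_pmf (\<rho> j)" "d \<in> Msg j"
  shows "measure_pmf.expectation (Pi_pmf UNIV undefined \<rho>) (\<lambda>x. U (u j \<theta>) (g (x(j:=d))))
       \<le> measure_pmf.expectation (Pi_pmf UNIV undefined \<rho>) (\<lambda>x. U (u j \<theta>) (g (x(j:=y))))"
proof -
  define P where "P = Pi_pmf UNIV undefined \<rho>"
  define pay where "pay = (\<lambda>d. measure_pmf.expectation P (\<lambda>x. U (u j \<theta>) (g (x(j:=d)))))"
  define V where "V = U (u j \<theta>) (outcome g \<rho>)"
  have V: "V = measure_pmf.expectation (\<rho> j) pay"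
  proof -
    have "V = U (u j \<theta>) (outcome g (\<rho>(j := \<rho> j)))" by (simp add: V_def)
    also have "\<dots> = measure_pmf.expectation (\<rho> j) pay"
      unfolding outcome_upd pay_def P_def ..
    finally show ?thesis .
  qed
  have le: "pay d' \<le> V" if "d' \<in> Msg j" for d'
  proof -
    have "pay d' = U (u j \<theta>) (outcome g (\<rho>(j := return_pmf d')))"
      by (simp add: outcome_upd_return pay_def P_def)
    also have "\<dots> \<le> V" using assms(1) that unfolding is_MNE_def V_def by auto
    finally show ?thesis .
  qed
  have sub: "set_pmf (\<rho> j) \<subseteq> Msg j" using assms(1) by (auto simp: is_MNE_def)
  have int: "integrable (measure_pmf (\<rho> j)) pay" unfolding pay_def by simp
  have "measure_pmf.expectation (\<rho> j) (\<lambda>y. V - pay y) = 0"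
    using V int by (simp add: Bochner_Integration.integral_diff)
  hence "AE y in measure_pmf (\<rho> j). V - pay y = 0"
    using int le sub by (subst (asm) integral_nonneg_eq_0_iff_AE) (auto simp: AE_measure_pmf_iff)
  hence "pay y = V" using assms(2) by (auto simp: AE_measure_pmf_iff)
  with le[OF assms(3)] show ?thesis by (simp add: pay_def P_def)
qed



lemma A_imp_pure:
  fixes u :: "'i::finite \<Rightarrow> 'th::countable \<Rightarrow> 'z::finite \<Rightarrow> real"
  assumes "mixed_Nash_A_implementable u F"
  shows "pure_Nash_implementable u F"
proof -
  obtain Msg :: "'i \<Rightarrow> nat set" and g where MG: "\<And>\<theta>. MNE_outcomes Msg g u \<theta> = F \<theta>"
    using assms unfolding mixed_Nash_A_implementable_def by blast
  have ex: "\<exists>\<sigma>. is_MNE Msg g u \<theta> \<sigma> \<and> z \<in> set_pmf (outcome g \<sigma>)" if "z \<in> F \<theta>" for \<theta> z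
    using that MG[of \<theta>] unfolding MNE_outcomes_def by auto
  define sig where "sig \<theta> z = (SOME \<sigma>. is_MNE Msg g u \<theta> \<sigma> \<and> z \<in> set_pmf (outcome g \<sigma>))" for \<theta> z
  have sig: "\<And>\<theta> z. z \<in> F \<theta> \<Longrightarrow> is_MNE Msg g u \<theta> (sig \<theta> z) \<and> z \<in> set_pmf (outcome g (sig \<theta> z))"
    unfolding sig_def by (rule someI_ex[OF ex])
  define Val :: "'i \<Rightarrow> (nat + 'th \<times> 'z) set" where
    "Val i = Inl ` Msg i \<union> {Inr (\<theta>, z) | \<theta> z. z \<in> F \<theta>}" for i
  define Msg' where "Msg' i = to_nat ` Val i" for i
  define interp :: "'i \<Rightarrow> nat \<Rightarrow> nat pmf" where
    "interp i n = (case from_nat n :: nat + 'th \<times> 'z of Inl m \<Rightarrow> return_pmf m | Inr (\<theta>, z) \<Rightarrow> sig \<theta> z i)" for i n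
  define g' where "g' n = outcome g (\<lambda>i. interp i (n i))" for n
  have interp_sub: "set_pmf (interp i n) \<subseteq> Msg i" if "n \<in> Msg' i" for i n
    using that sig unfolding Msg'_def Val_def interp_def is_MNE_def by fastforce
  have interp_Inl: "interp i (to_nat (Inl m :: nat + 'th \<times> 'z)) = return_pmf m" for i m
    by (simp add: interp_def)
  have equiv: "is_PNE Msg' g' u \<theta> n \<longleftrightarrow> is_MNE Msg g u \<theta> (\<lambda>i. interp i (n i))"
    if n: "\<And>i. n i \<in> Msg' i" for n \<theta>
  proof
    assume P: "is_PNE Msg' g' u \<theta> n"
    show "is_MNE Msg g u \<theta> (\<lambda>i. interp i (n i))"
      unfolding is_MNE_def
    proof (intro conjI allI impI)
      fix i show "set_pmf (interp i (n i)) \<subseteq> Msg i" using interp_sub n by auto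
    next
      fix i \<mu> assume mu: "set_pmf \<mu> \<subseteq> Msg i"
      have "U (u i \<theta>) (outcome g ((\<lambda>i. interp i (n i))(i := \<mu>))) =
         measure_pmf.expectation \<mu> (\<lambda>y. U (u i \<theta>) (outcome g ((\<lambda>i. interp i (n i))(i := return_pmf y))))"
        by (simp add: outcome_upd)
      also have "\<dots> \<le> U (u i \<theta>) (outcome g (\<lambda>i. interp i (n i)))"
      proof (rule expectation_le_const)
        fix y assume y: "y \<in> set_pmf \<mu>"
        have "(\<lambda>i. interp i (n i))(i := return_pmf y) = (\<lambda>l. interp l ((n(i := to_nat (Inl y :: nat + 'th \<times> 'z))) l))"
          by (auto simp: interp_Inl)
        hence "outcome g ((\<lambda>i. interp i (n i))(i := return_pmf y)) = g' (n(i := to_nat (Inl y :: nat + 'th \<times> 'z)))"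
          by (simp add: g'_def)
        moreover have "to_nat (Inl y :: nat + 'th \<times> 'z) \<in> Msg' i"
          using y mu unfolding Msg'_def Val_def by auto
        ultimately show "U (u i \<theta>) (outcome g ((\<lambda>i. interp i (n i))(i := return_pmf y))) \<le> U (u i \<theta>) (outcome g (\<lambda>i. interp i (n i)))"
          using P by (auto simp: is_PNE_def g'_def)
      next
        show "integrable (measure_pmf \<mu>) (\<lambda>y. U (u i \<theta>) (outcome g ((\<lambda>i. interp i (n i))(i := return_pmf y))))"
          by (intro measure_pmf.integrable_const_bound[where B="Ubd (u i \<theta>)"]) (auto intro: U_bound)
      qed
      finally show "U (u i \<theta>) (outcome g ((\<lambda>i. interp i (n i))(i := \<mu>))) \<le> U (u i \<theta>) (outcome g (\<lambda>i. interp i (n i)))" .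
    qed
  next
    assume M: "is_MNE Msg g u \<theta> (\<lambda>i. interp i (n i))"
    show "is_PNE Msg' g' u \<theta> n"
      unfolding is_PNE_def
    proof (intro conjI allI ballI)
      fix i show "n i \<in> Msg' i" by (rule n)
    next
      fix i m' assume m': "m' \<in> Msg' i"
      have "(\<lambda>l. interp l ((n(i := m')) l)) = (\<lambda>i. interp i (n i))(i := interp i m')" by auto
      thus "U (u i \<theta>) (g' (n(i := m'))) \<le> U (u i \<theta>) (g' n)"
        using M interp_sub[OF m'] unfolding is_MNE_def g'_def by auto
    qed
  qed
  have "PNE_outcomes Msg' g' u \<theta> = F \<theta>" for \<theta>
  proof
    show "PNE_outcomes Msg' g' u \<theta> \<subseteq> F \<theta>"
    proof
      fix z assume "z \<in> PNE_outcomes Msg' g' u \<theta>"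
      then obtain n where P: "is_PNE Msg' g' u \<theta> n" and z: "z \<in> set_pmf (g' n)"
        by (auto simp: PNE_outcomes_def)
      have n: "\<And>i. n i \<in> Msg' i" using P by (auto simp: is_PNE_def)
      have "is_MNE Msg g u \<theta> (\<lambda>i. interp i (n i))" using equiv[OF n] P by simp
      hence "z \<in> MNE_outcomes Msg g u \<theta>" using z by (auto simp: MNE_outcomes_def g'_def)
      thus "z \<in> F \<theta>" using MG by simp
    qed
  next
    show "F \<theta> \<subseteq> PNE_outcomes Msg' g' u \<theta>"
    proof
      fix z assume z: "z \<in> F \<theta>"
      define n where "n = (\<lambda>i::'i. to_nat (Inr (\<theta>, z) :: nat + 'th \<times> 'z))"
      have n: "\<And>i. n i \<in> Msg' i" using z by (auto simp: n_def Msg'_def Val_def)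
      have I: "(\<lambda>i. interp i (n i)) = sig \<theta> z" by (auto simp: n_def interp_def)
      have "is_PNE Msg' g' u \<theta> n" using equiv[OF n] sig[OF z] I by simp
      moreover have "z \<in> set_pmf (g' n)" using sig[OF z] I by (simp add: g'_def)
      ultimately show "z \<in> PNE_outcomes Msg' g' u \<theta>" by (auto simp: PNE_outcomes_def)
    qed
  qed
  thus ?thesis unfolding pure_Nash_implementable_def by blast
qed



type_synonym 'i msg = "('i \<Rightarrow> nat) \<times> (('i \<Rightarrow> nat) \<times> nat) list \<times> nat \<times> ('i \<Rightarrow> nat)"

definition ag :: "'i msg \<Rightarrow> ('i \<Rightarrow> nat)" where "ag x = fst x"
definition cl :: "'i msg \<Rightarrow> (('i \<Rightarrow> nat) \<times> nat) list" where "cl x = fst (snd x)"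
definition kk :: "'i msg \<Rightarrow> nat" where "kk x = fst (snd (snd x))"
definition rq :: "'i msg \<Rightarrow> ('i \<Rightarrow> nat)" where "rq x = snd (snd (snd x))"

lemma msg_sel [simp]: "ag (a, c, k, r) = a" "cl (a, c, k, r) = c" "kk (a, c, k, r) = k" "rq (a, c, k, r) = r"
  by (simp_all add: ag_def cl_def kk_def rq_def)

definition agrees :: "'i msg \<Rightarrow> ('i \<Rightarrow> nat) \<Rightarrow> bool" where
  "agrees x p \<longleftrightarrow> ag x = p \<and> kk x = 0 \<and> map_of (cl x) p = None"

definition dev :: "'i msg \<Rightarrow> ('i \<Rightarrow> nat) \<Rightarrow> 'i \<Rightarrow> nat" where
  "dev x p i = (case map_of (cl x) p of None \<Rightarrow> p i | Some m \<Rightarrow> m)"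

definition oa :: "('i \<Rightarrow> 'i msg) \<Rightarrow> 'i \<Rightarrow> ('i \<Rightarrow> nat) \<Rightarrow> bool" where
  "oa X j p \<longleftrightarrow> (\<forall>l. l \<noteq> j \<longrightarrow> agrees (X l) p)"

definition winner :: "('i \<Rightarrow> 'i msg) \<Rightarrow> 'i" where
  "winner X = (SOME i. \<forall>l. kk (X l) \<le> kk (X i))"

lemma winner_eq: assumes "\<And>l. l \<noteq> i \<Longrightarrow> kk (X l) < kk (X i)" shows "winner X = i"
proof -
  have "\<forall>l. kk (X l) \<le> kk (X (winner X))" unfolding winner_def
    by (rule someI[of _ i]) (metis assms less_imp_le order_refl)
  thus ?thesis using assms by (metis not_le)
qed

lemma other_exists: "CARD('i::finite) \<ge> 3 \<Longrightarrow> \<exists>l::'i. l \<noteq> a \<and> l \<noteq> b"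
proof (rule ccontr)
  assume c: "CARD('i) \<ge> 3" and "\<not> (\<exists>l::'i. l \<noteq> a \<and> l \<noteq> b)"
  hence "(UNIV :: 'i set) \<subseteq> {a, b}" by auto
  hence "CARD('i) \<le> card {a, b}" by (intro card_mono) auto
  also have "\<dots> \<le> 2" by (simp add: card_insert_if)
  finally show False using c by simp
qed

lemma dev_agrees: "agrees x p \<Longrightarrow> dev x p i = p i"
  by (simp add: agrees_def dev_def)

lemma oa_upd [simp]: "oa (X(j := y)) j p = oa X j p"
  by (simp add: oa_def)

lemma oa_unique:
  assumes "CARD('i::finite) \<ge> 3" "oa X (j::'i) p" "oa X j p'" shows "p = p'"
proof -
  obtain l where "l \<noteq> j" using other_exists[OF assms(1)] by blast
  thus ?thesis using assms by (auto simp: oa_def agrees_def)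
qed

lemma oa_same:
  assumes "CARD('i::finite) \<ge> 3" "oa X (j::'i) p" "oa X j' p'"
  shows "p(j := dev (X j) p j) = p'(j' := dev (X j') p' j')"
proof (cases "j = j'")
  case True thus ?thesis using oa_unique[OF assms(1,2)] assms(3) by simp
next
  case False
  obtain l where l: "l \<noteq> j" "l \<noteq> j'" using other_exists[OF assms(1)] by blast
  have "p = p'" using assms l by (auto simp: oa_def agrees_def)
  moreover have "agrees (X j) p'" "agrees (X j') p" using assms False \<open>p = p'\<close> by (auto simp: oa_def)
  ultimately show ?thesis by (simp add: dev_agrees)
qed

lemma oa_others_disagree:
  assumes "CARD('i::finite) \<ge> 3" "oa X (j::'i) p" "\<not> agrees (X j) p" "l \<noteq> j"
  shows "\<not> oa X l p'"
proof
  assume o: "oa X l p'"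
  obtain l' where l': "l' \<noteq> j" "l' \<noteq> l" using other_exists[OF assms(1)] by blast
  have "p = p'" using assms(2) o l' by (auto simp: oa_def agrees_def)
  thus False using o assms(3,4) by (auto simp: oa_def)
qed

locale canon =
  fixes Msg :: "'i::finite \<Rightarrow> nat set" and g :: "('i \<Rightarrow> nat) \<Rightarrow> 'z::finite pmf"
  assumes card3: "CARD('i) \<ge> 3"
begin

definition gg :: "('i \<Rightarrow> 'i msg) \<Rightarrow> 'z pmf" where
  "gg X = (if \<exists>jp. oa X (fst jp) (snd jp)
     then (case SOME jp. oa X (fst jp) (snd jp) of (j, p) \<Rightarrow> g (p(j := dev (X j) p j)))
     else g (rq (X (winner X))))"

lemma gg_oa: assumes "oa X j p" shows "gg X = g (p(j := dev (X j) p j))"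
proof -
  have ex: "\<exists>jp. oa X (fst jp) (snd jp)" using assms by (intro exI[of _ "(j,p)"]) simp
  obtain j' p' where jp: "(SOME jp. oa X (fst jp) (snd jp)) = (j', p')" by (cases "SOME jp. oa X (fst jp) (snd jp)")
  have "oa X j' p'" using someI_ex[OF ex] jp by simp
  thus ?thesis using ex jp oa_same[OF card3 assms, of j' p'] by (simp add: gg_def)
qed

lemma gg_rule3: assumes "\<And>j p. \<not> oa X j p" shows "gg X = g (rq (X (winner X)))"
  using assms by (simp add: gg_def)

definition Mprof :: "('i \<Rightarrow> nat) set" where "Mprof = {q. \<forall>l. q l \<in> Msg l}"

definition valid :: "'i \<Rightarrow> 'i msg \<Rightarrow> bool" where
  "valid i x \<longleftrightarrow> ag x \<in> Mprof \<and> rq x \<in> Mprof \<and> (\<forall>qm\<in>set (cl x). snd qm \<in> Msg i)"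

definition Msg' :: "'i \<Rightarrow> nat set" where "Msg' i = to_nat ` {x. valid i x}"

definition dec :: "('i \<Rightarrow> nat) \<Rightarrow> ('i \<Rightarrow> 'i msg)" where "dec n = (\<lambda>i. from_nat (n i))"

definition gn :: "('i \<Rightarrow> nat) \<Rightarrow> 'z pmf" where "gn n = gg (dec n)"

lemma dec_upd [simp]: "dec (n(j := to_nat y)) = (dec n)(j := y)"
  by (auto simp: dec_def)

lemma dev_valid: "valid i x \<Longrightarrow> p \<in> Mprof \<Longrightarrow> dev x p i \<in> Msg i"
  by (auto simp: dev_def valid_def Mprof_def split: option.splits dest!: map_of_SomeD)

lemma valid_Msg': "valid i x \<Longrightarrow> to_nat x \<in> Msg' i"
  by (auto simp: Msg'_def)

lemma Msg'_valid: "n \<in> Msg' i \<Longrightarrow> valid i (from_nat n) \<and> to_nat (from_nat n :: 'i msg) = n"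
  by (auto simp: Msg'_def)

lemma gg_valid:
  assumes "\<And>l. valid l (X l)"
  shows "\<exists>q\<in>Mprof. gg X = g q"
proof (cases "\<exists>j p. oa X j p")
  case True
  then obtain j p where o: "oa X j p" by blast
  obtain l where l: "l \<noteq> j" using other_exists[OF card3] by blast
  have "p \<in> Mprof" using o l assms[of l] by (auto simp: oa_def agrees_def valid_def)
  hence "p(j := dev (X j) p j) \<in> Mprof" using dev_valid[OF assms[of j]] by (auto simp: Mprof_def)
  thus ?thesis using gg_oa[OF o] by blast
next
  case False thus ?thesis using gg_rule3[of X] assms[of "winner X"] by (auto simp: valid_def)
qed

end



locale canon_mne = canon Msg g for Msg :: "'i::finite \<Rightarrow> nat set" and g :: "('i \<Rightarrow> nat) \<Rightarrow> 'z::finite pmf" +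
  fixes u :: "'i \<Rightarrow> 'th \<Rightarrow> 'z \<Rightarrow> real" and \<theta> :: 'th and \<rho> :: "'i \<Rightarrow> nat pmf"
  assumes mne: "is_MNE Msg' gn u \<theta> \<rho>"
begin

abbreviation "P \<equiv> Pi_pmf UNIV undefined \<rho>"
abbreviation "v j \<equiv> u j \<theta>"
definition t :: "'i \<Rightarrow> real" where "t j = (SUP q\<in>Mprof. U (v j) (g q))"

lemma suppP: "n \<in> set_pmf P \<Longrightarrow> n i \<in> set_pmf (\<rho> i)"
  by (auto simp: set_Pi_pmf PiE_dflt_def)

lemma supp_valid: "n \<in> set_pmf P \<Longrightarrow> valid i (dec n i) \<and> to_nat (dec n i) = n i"
  using suppP[of n i] mne Msg'_valid[of "n i" i] by (auto simp: is_MNE_def dec_def)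

lemma bdd: "bdd_above ((\<lambda>q. U (v j) (g q)) ` Mprof)"
  by (rule bdd_aboveI[of _ "Ubd (v j)"]) (auto intro: order_trans[OF abs_ge_self U_bound])

lemma le_t: "q \<in> Mprof \<Longrightarrow> U (v j) (g q) \<le> t j"
  unfolding t_def by (rule cSUP_upper[OF _ bdd])

lemma approx: assumes "Mprof \<noteq> {}" "e > 0" shows "\<exists>q\<in>Mprof. t j - e < U (v j) (g q)"
proof -
  have "t j - e < t j" using assms by simp
  thus ?thesis unfolding t_def by (subst (asm) less_cSUP_iff[OF assms(1) bdd]) 
qed

lemma gg_le_t: "(\<And>l. valid l (X l)) \<Longrightarrow> U (v j) (gg X) \<le> t j"
  using gg_valid[of X] le_t by auto

lemma pay_le:
  assumes y: "to_nat y \<in> set_pmf (\<rho> j)" and d: "valid j d"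
  shows "measure_pmf.expectation P (\<lambda>n. U (v j) (gg ((dec n)(j := d))))
       \<le> measure_pmf.expectation P (\<lambda>n. U (v j) (gg ((dec n)(j := y))))"
  using MNE_support[OF mne y valid_Msg'[OF d]] by (simp add: gn_def)

lemma LimDev:
  assumes y: "to_nat y \<in> set_pmf (\<rho> j)" and d: "valid j d"
  shows "measure_pmf.expectation P (\<lambda>n. if \<exists>p. oa (dec n) j p then U (v j) (gg ((dec n)(j := d))) else U (v j) (g (rq d)))
       \<le> measure_pmf.expectation P (\<lambda>n. U (v j) (gg ((dec n)(j := y))))"
proof -
  define dK where "dK K = (ag d, cl d, Suc K, rq d)" for K
  define L where "L n = (if \<exists>p. oa (dec n) j p then U (v j) (gg ((dec n)(j := d))) else U (v j) (g (rq d)))" for n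
  define s where "s K n = U (v j) (gg ((dec n)(j := dK K)))" for K n
  have vK: "valid j (dK K)" for K using d by (simp add: dK_def valid_def)
  have lim: "(\<lambda>K. s K n) \<longlonglongrightarrow> L n" for n
  proof (rule tendsto_eventually)
    show "\<forall>\<^sub>F K in sequentially. s K n = L n"
    proof (cases "\<exists>p. oa (dec n) j p")
      case True
      then obtain p where o: "oa (dec n) j p" by blast
      have "s K n = L n" for K
        using o gg_oa[of "(dec n)(j := dK K)" j p] gg_oa[of "(dec n)(j := d)" j p] True
        by (simp add: s_def L_def dev_def dK_def)
      thus ?thesis by simp
    next
      case False
      define K0 where "K0 = Max (range (\<lambda>l. kk (dec n l)))"
      have "s K n = L n" if "K \<ge> K0" for K
      proof -
        have no: "\<not> oa ((dec n)(j := dK K)) l p" for l p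
        proof (cases "l = j")
          case True thus ?thesis using False by simp
        next
          case False
          thus ?thesis by (auto simp: oa_def agrees_def dK_def)
        qed
        have "kk (dec n l) \<le> K0" for l unfolding K0_def by (rule Max_ge) auto
        hence "winner ((dec n)(j := dK K)) = j" using that
          by (intro winner_eq) (auto simp: dK_def intro: le_imp_less_Suc order_trans)
        thus ?thesis using gg_rule3[OF no] False by (simp add: s_def L_def dK_def)
      qed
      thus ?thesis unfolding eventually_sequentially by blast
    qed
  qed
  have "(\<lambda>K. measure_pmf.expectation P (s K)) \<longlonglongrightarrow> measure_pmf.expectation P L"
  proof (rule integral_dominated_convergence[where w="\<lambda>_. Ubd (v j)"])
    show "AE n in measure_pmf P. (\<lambda>K. s K n) \<longlonglongrightarrow> L n" using lim by (intro AE_pmfI) auto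
  qed (auto simp: s_def intro: U_bound)
  moreover have "measure_pmf.expectation P (s K) \<le> measure_pmf.expectation P (\<lambda>n. U (v j) (gg ((dec n)(j := y))))" for K
    unfolding s_def by (rule pay_le[OF y vK])
  ultimately have "measure_pmf.expectation P L \<le> measure_pmf.expectation P (\<lambda>n. U (v j) (gg ((dec n)(j := y))))"
    by (intro LIMSEQ_le_const2) auto
  thus ?thesis unfolding L_def .
qed

lemma int_bdd: "(\<And>x. \<bar>f x\<bar> \<le> B) \<Longrightarrow> integrable (measure_pmf p) (f :: _ \<Rightarrow> real)"
  by (intro measure_pmf.integrable_const_bound[where B=B]) auto

lemma valid_upd: "n \<in> set_pmf P \<Longrightarrow> valid j y \<Longrightarrow> valid l (((dec n)(j := y)) l)"
  using supp_valid by auto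

lemma Top:
  assumes y: "to_nat y \<in> set_pmf (\<rho> j)" "valid j y" and n: "n \<in> set_pmf P" "\<forall>p. \<not> oa (dec n) j p"
  shows "U (v j) (gg ((dec n)(j := y))) = t j"
proof -
  define N where "N = {n. \<forall>p. \<not> oa (dec n) j p}"
  define h where "h n = U (v j) (gg ((dec n)(j := y)))" for n
  define f where "f n = (if n \<in> N then t j - h n else 0)" for n
  have hb: "\<bar>h n\<bar> \<le> Ubd (v j)" for n unfolding h_def by (rule U_bound)
  have fb: "\<bar>f n\<bar> \<le> \<bar>t j\<bar> + Ubd (v j)" for n using hb[of n] by (auto simp: f_def)
  have Mne: "Mprof \<noteq> {}" using y(2) by (auto simp: valid_def)
  have Ef: "measure_pmf.expectation P f \<le> t j - U (v j) (g r)" if r: "r \<in> Mprof" for r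
  proof -
    define d where "d = (ag y, cl y, 0::nat, r)"
    have vd: "valid j d" using y(2) r by (simp add: d_def valid_def)
    define L where "L n = (if \<exists>p. oa (dec n) j p then U (v j) (gg ((dec n)(j := d))) else U (v j) (g (rq d)))" for n
    define a where "a n = (if n \<in> N then t j - U (v j) (g r) else 0)" for n
    have Lb: "\<bar>L n\<bar> \<le> Ubd (v j)" for n unfolding L_def by (auto intro: U_bound)
    have ab: "\<bar>a n\<bar> \<le> \<bar>t j\<bar> + Ubd (v j)" for n
      using U_bound[of "v j" "g r"] by (auto simp: a_def)
    have eq: "f n = a n - (h n - L n)" for n
    proof (cases "n \<in> N")
      case True thus ?thesis by (simp add: f_def a_def L_def N_def d_def)
    next
      case False
      then obtain p where o: "oa (dec n) j p" by (auto simp: N_def)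
      have "gg ((dec n)(j := d)) = gg ((dec n)(j := y))"
        using gg_oa[of "(dec n)(j := d)" j p] gg_oa[of "(dec n)(j := y)" j p] o
        by (simp add: d_def dev_def)
      thus ?thesis using False o by (auto simp: f_def a_def L_def h_def)
    qed
    have "measure_pmf.expectation P f = measure_pmf.expectation P a - (measure_pmf.expectation P h - measure_pmf.expectation P L)"
      unfolding eq[abs_def]
      by (subst Bochner_Integration.integral_diff; (intro int_bdd Bochner_Integration.integrable_diff)?; (rule ab hb Lb)?)
         (subst Bochner_Integration.integral_diff; (rule int_bdd, rule hb Lb)?; simp)
    moreover have "measure_pmf.expectation P L \<le> measure_pmf.expectation P h"
      using LimDev[OF y(1) vd] unfolding L_def h_def by (simp add: d_def)
    moreover have "measure_pmf.expectation P a \<le> t j - U (v j) (g r)"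
      using le_t[OF r, of j] by (intro expectation_le_const int_bdd[OF ab]) (auto simp: a_def)
    ultimately show ?thesis by linarith
  qed
  have Ef0: "measure_pmf.expectation P f \<le> 0"
  proof (rule ccontr)
    assume "\<not> ?thesis"
    then obtain r where "r \<in> Mprof" "t j - measure_pmf.expectation P f < U (v j) (g r)"
      using approx[OF Mne, of "measure_pmf.expectation P f" j] by auto
    thus False using Ef by fastforce
  qed
  have fnn: "0 \<le> f n'" if "n' \<in> set_pmf P" for n'
    using gg_le_t[OF valid_upd[OF that y(2)], of j] by (simp add: f_def h_def fun_upd_def)
  have "measure_pmf.expectation P f = 0"
    using Ef0 fnn by (intro antisym Bochner_Integration.integral_nonneg_AE) (auto simp: AE_measure_pmf_iff)
  hence "AE n in measure_pmf P. f n = 0"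
    using fnn by (subst (asm) integral_nonneg_eq_0_iff_AE) (auto intro: int_bdd[OF fb] simp: AE_measure_pmf_iff)
  hence "f n = 0" using n(1) by (auto simp: AE_measure_pmf_iff)
  thus ?thesis using n(2) by (auto simp: f_def h_def N_def)
qed

lemma oa_Mprof: "n \<in> set_pmf P \<Longrightarrow> oa (dec n) i p \<Longrightarrow> p \<in> Mprof"
proof -
  assume n: "n \<in> set_pmf P" and o: "oa (dec n) i p"
  obtain l where "l \<noteq> i" using other_exists[OF card3] by blast
  thus "p \<in> Mprof" using o supp_valid[OF n, of l] by (auto simp: oa_def agrees_def valid_def)
qed

lemma Dev:
  assumes n0: "n0 \<in> set_pmf P" "oa (dec n0) i p" and m': "m' \<in> Msg i"
  shows "U (v i) (g (p(i := m'))) \<le> U (v i) (g (p(i := dev (dec n0 i) p i)))"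
proof -
  define y where "y = dec n0 i"
  have y: "to_nat y \<in> set_pmf (\<rho> i)" "valid i y"
    using supp_valid[OF n0(1), of i] suppP[OF n0(1), of i] by (auto simp: y_def)
  have pM: "p \<in> Mprof" by (rule oa_Mprof[OF n0])
  have Mne: "Mprof \<noteq> {}" using pM by auto
  define Ep where "Ep = {n. oa (dec n) i p}"
  define N where "N = {n. \<forall>p. \<not> oa (dec n) i p}"
  define c where "c = U (v i) (g (p(i := dev y p i))) - U (v i) (g (p(i := m')))"
  define h where "h n = U (v i) (gg ((dec n)(i := y)))" for n
  have hb: "\<bar>h n\<bar> \<le> Ubd (v i)" for n unfolding h_def by (rule U_bound)
  have key: "c * measure_pmf.prob P Ep \<ge> - (t i - U (v i) (g r))" if r: "r \<in> Mprof" for r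
  proof -
    define d where "d = (ag y, (p, m') # cl y, 0::nat, r)"
    have vd: "valid i d" using y(2) r m' by (auto simp: d_def valid_def)
    define L where "L n = (if \<exists>p. oa (dec n) i p then U (v i) (gg ((dec n)(i := d))) else U (v i) (g (rq d)))" for n
    define a where "a n = (if n \<in> N then t i - U (v i) (g r) else 0)" for n
    have Lb: "\<bar>L n\<bar> \<le> Ubd (v i)" for n unfolding L_def by (auto intro: U_bound)
    have ab: "\<bar>a n\<bar> \<le> \<bar>t i\<bar> + Ubd (v i)" for n
      using U_bound[of "v i" "g r"] by (auto simp: a_def)
    have eq: "h n - L n = c * indicator Ep n + a n" if n: "n \<in> set_pmf P" for n
    proof (cases "n \<in> N")
      case True
      hence "h n = t i" using Top[OF y n] by (simp add: N_def h_def)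
      moreover have "n \<notin> Ep" using True by (auto simp: N_def Ep_def)
      ultimately show ?thesis using True by (simp add: a_def L_def N_def d_def)
    next
      case False
      then obtain p'' where o: "oa (dec n) i p''" by (auto simp: N_def)
      have hL: "h n - L n = U (v i) (g (p''(i := dev y p'' i))) - U (v i) (g (p''(i := dev d p'' i)))"
        using gg_oa[of "(dec n)(i := d)" i p''] gg_oa[of "(dec n)(i := y)" i p''] o
        unfolding h_def L_def by auto
      show ?thesis
      proof (cases "p'' = p")
        case True
        hence "n \<in> Ep" using o by (simp add: Ep_def)
        thus ?thesis using hL True False by (simp add: c_def a_def d_def dev_def)
      next
        case pne: False
        hence "n \<notin> Ep" using o oa_unique[OF card3, of "dec n" i p'' p] by (auto simp: Ep_def)
        thus ?thesis using hL pne False by (simp add: a_def d_def dev_def)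
      qed
    qed
    have "measure_pmf.expectation P (\<lambda>n. h n - L n) = measure_pmf.expectation P (\<lambda>n. c * indicator Ep n + a n)"
      using eq by (intro integral_cong_AE) (auto simp: AE_measure_pmf_iff)
    also have "\<dots> = c * measure_pmf.prob P Ep + measure_pmf.expectation P a"
      by (subst Bochner_Integration.integral_add) (auto intro: int_bdd[OF ab] simp: measure_pmf.emeasure_eq_measure)
    finally have E1: "measure_pmf.expectation P (\<lambda>n. h n - L n) = c * measure_pmf.prob P Ep + measure_pmf.expectation P a" .
    have "measure_pmf.expectation P (\<lambda>n. h n - L n) = measure_pmf.expectation P h - measure_pmf.expectation P L"
      by (intro Bochner_Integration.integral_diff int_bdd[OF hb] int_bdd[OF Lb])
    moreover have "measure_pmf.expectation P L \<le> measure_pmf.expectation P h"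
      using LimDev[OF y(1) vd] unfolding L_def h_def by (simp add: d_def)
    moreover have "measure_pmf.expectation P a \<le> t i - U (v i) (g r)"
      using le_t[OF r, of i] by (intro expectation_le_const int_bdd[OF ab]) (auto simp: a_def)
    ultimately show ?thesis using E1 by linarith
  qed
  have cP: "c * measure_pmf.prob P Ep \<ge> 0"
  proof (rule ccontr)
    assume "\<not> ?thesis"
    then obtain r where "r \<in> Mprof" "t i - (- (c * measure_pmf.prob P Ep)) < U (v i) (g r)"
      using approx[OF Mne, of "- (c * measure_pmf.prob P Ep)" i] by auto
    thus False using key by fastforce
  qed
  have "measure_pmf.prob P Ep \<ge> measure_pmf.prob P {n0}"
    using n0 by (intro measure_pmf.finite_measure_mono) (auto simp: Ep_def)
  moreover have "measure_pmf.prob P {n0} > 0"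
    using n0(1) by (simp add: measure_pmf_single pmf_positive)
  ultimately have "measure_pmf.prob P Ep > 0" by linarith
  hence "c \<ge> 0" using cP by (simp add: zero_le_mult_iff)
  thus ?thesis by (simp add: c_def y_def)
qed

lemma realized_PNE:
  assumes n: "n \<in> set_pmf P"
  shows "\<exists>q. gn n = g q \<and> is_PNE Msg g u \<theta> q"
proof -
  define X where "X = dec n"
  have XX: "(dec n)(i := X i) = dec n" for i by (auto simp: X_def)
  have yi: "to_nat (X i) \<in> set_pmf (\<rho> i)" "valid i (X i)" for i
    using supp_valid[OF n, of i] suppP[OF n, of i] by (auto simp: X_def)
  have topX: "U (v i) (gg X) = t i" if "\<forall>p. \<not> oa X i p" for i
    using Top[OF yi n, of i] that XX by (simp add: X_def)
  show ?thesis
  proof (cases "\<exists>j p. oa X j p")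
    case True
    then obtain j p where o: "oa X j p" by blast
    define q where "q = p(j := dev (X j) p j)"
    have pM: "p \<in> Mprof" using oa_Mprof[OF n] o by (simp add: X_def)
    have qM: "q \<in> Mprof" using pM dev_valid[OF yi(2) pM, of j] by (auto simp: q_def Mprof_def)
    have "is_PNE Msg g u \<theta> q"
      unfolding is_PNE_def
    proof (intro conjI allI ballI)
      fix i show "q i \<in> Msg i" using qM by (simp add: Mprof_def)
    next
      fix i m' assume m': "m' \<in> Msg i"
      show "U (u i \<theta>) (g (q(i := m'))) \<le> U (u i \<theta>) (g q)"
      proof (cases "i = j")
        case True thus ?thesis using Dev[OF n _ m', of p] o by (simp add: q_def X_def)
      next
        case ij: False
        show ?thesis
        proof (cases "agrees (X j) p")
          case True
          have oi: "oa X i p" using o True ij by (auto simp: oa_def)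
          have "q = p" using True by (simp add: q_def dev_agrees)
          moreover have "dev (X i) p i = p i" using o ij by (auto simp: oa_def dev_agrees)
          ultimately show ?thesis using Dev[OF n _ m', of p] oi by (simp add: X_def)
        next
          case False
          have "\<forall>p'. \<not> oa X i p'" using oa_others_disagree[OF card3 o False ij] by blast
          hence "U (v i) (gg X) = t i" by (rule topX)
          moreover have "q(i := m') \<in> Mprof" using qM m' by (auto simp: Mprof_def)
          ultimately show ?thesis using le_t[of "q(i := m')" i] gg_oa[OF o] by (simp add: q_def)
        qed
      qed
    qed
    thus ?thesis using gg_oa[OF o] by (auto simp: gn_def X_def q_def)
  next
    case False
    define q where "q = rq (X (winner X))"
    have eq: "gn n = g q" using gg_rule3[of X] False by (simp add: gn_def X_def q_def)
    have qM: "q \<in> Mprof" using yi(2)[of "winner X"] by (simp add: valid_def q_def)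
    have "is_PNE Msg g u \<theta> q"
      unfolding is_PNE_def
    proof (intro conjI allI ballI)
      fix i show "q i \<in> Msg i" using qM by (simp add: Mprof_def)
    next
      fix i m' assume m': "m' \<in> Msg i"
      have "U (v i) (gg X) = t i" using False by (intro topX) auto
      moreover have "q(i := m') \<in> Mprof" using qM m' by (auto simp: Mprof_def)
      ultimately show "U (u i \<theta>) (g (q(i := m'))) \<le> U (u i \<theta>) (g q)"
        using le_t[of "q(i := m')" i] eq by (simp add: gn_def X_def)
    qed
    thus ?thesis using eq by blast
  qed
qed

lemma mne_outcome_sub: "set_pmf (outcome gn \<rho>) \<subseteq> PNE_outcomes Msg g u \<theta>"
proof
  fix z assume "z \<in> set_pmf (outcome gn \<rho>)"
  then obtain n where n: "n \<in> set_pmf P" and z: "z \<in> set_pmf (gn n)" by (auto simp: outcome_def)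
  obtain q where "gn n = g q" "is_PNE Msg g u \<theta> q" using realized_PNE[OF n] by blast
  thus "z \<in> PNE_outcomes Msg g u \<theta>" using z by (auto simp: PNE_outcomes_def)
qed

end



lemma pure_imp_B:
  fixes u :: "'i::finite \<Rightarrow> 'th \<Rightarrow> 'z::finite \<Rightarrow> real"
  assumes card: "CARD('i) \<ge> 3" and pure: "pure_Nash_implementable u F"
  shows "mixed_Nash_B_implementable u F"
proof -
  obtain Msg :: "'i \<Rightarrow> nat set" and g where MG: "\<And>\<theta>. PNE_outcomes Msg g u \<theta> = F \<theta>"
    using pure unfolding pure_Nash_implementable_def by blast
  interpret canon Msg g by unfold_locales (rule card)
  have MNEsub: "set_pmf (outcome gn \<rho>) \<subseteq> F \<theta>" if "is_MNE Msg' gn u \<theta> \<rho>" for \<theta> \<rho>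
  proof -
    interpret canon_mne Msg g u \<theta> \<rho> by unfold_locales (rule that)
    show ?thesis using mne_outcome_sub MG by simp
  qed
  have good: "\<exists>n. is_PNE Msg' gn u \<theta> n \<and> z \<in> set_pmf (gn n)" if z: "z \<in> F \<theta>" for \<theta> z
  proof -
    obtain m where m: "is_PNE Msg g u \<theta> m" "z \<in> set_pmf (g m)"
      using z MG[of \<theta>] by (auto simp: PNE_outcomes_def)
    have mM: "m \<in> Mprof" using m(1) by (auto simp: is_PNE_def Mprof_def)
    define e :: "'i msg" where "e = (m, [], 0, m)"
    have ve: "valid i e" for i using mM by (simp add: e_def valid_def)
    define n where "n = (\<lambda>i::'i. to_nat e)"
    have dn: "dec n = (\<lambda>_. e)" by (simp add: dec_def n_def)
    have ae: "agrees e m" by (simp add: e_def agrees_def)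
    obtain i0 :: 'i where True by blast
    have gnn: "gn n = g m"
      using gg_oa[of "dec n" i0 m] ae by (simp add: gn_def dn oa_def dev_agrees)
    have "is_PNE Msg' gn u \<theta> n"
      unfolding is_PNE_def
    proof (intro conjI allI ballI)
      fix i show "n i \<in> Msg' i" using valid_Msg'[OF ve] by (simp add: n_def)
    next
      fix i n' assume n': "n' \<in> Msg' i"
      define x :: "'i msg" where "x = from_nat n'"
      have vx: "valid i x" using Msg'_valid[OF n'] by (simp add: x_def)
      have "dec (n(i := n')) = (dec n)(i := x)" by (auto simp: dec_def x_def)
      moreover have "oa ((dec n)(i := x)) i m" using ae by (simp add: oa_def dn)
      ultimately have "gn (n(i := n')) = g (m(i := dev x m i))"
        using gg_oa[of "(dec n)(i := x)" i m] by (simp add: gn_def)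
      moreover have "dev x m i \<in> Msg i" by (rule dev_valid[OF vx mM])
      ultimately show "U (u i \<theta>) (gn (n(i := n'))) \<le> U (u i \<theta>) (gn n)"
        using m(1) gnn by (simp add: is_PNE_def)
    qed
    thus ?thesis using m(2) gnn by (intro exI[of _ n]) simp
  qed
  have "MNE_outcomes Msg' gn u \<theta> = F \<theta> \<and> PNE_outcomes Msg' gn u \<theta> = F \<theta>" for \<theta>
  proof (intro conjI equalityI subsetI)
    fix z assume "z \<in> MNE_outcomes Msg' gn u \<theta>"
    thus "z \<in> F \<theta>" using MNEsub by (auto simp: MNE_outcomes_def)
  next
    fix z assume "z \<in> F \<theta>"
    then obtain n where "is_PNE Msg' gn u \<theta> n" "z \<in> set_pmf (gn n)" using good by blast
    thus "z \<in> MNE_outcomes Msg' gn u \<theta>"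
      using PNE_MNE[of Msg' gn u \<theta> n] outcome_return[of gn n] unfolding MNE_outcomes_def by force
  next
    fix z assume "z \<in> PNE_outcomes Msg' gn u \<theta>"
    then obtain n where n: "is_PNE Msg' gn u \<theta> n" "z \<in> set_pmf (gn n)" by (auto simp: PNE_outcomes_def)
    have "set_pmf (gn n) \<subseteq> F \<theta>" using MNEsub[OF PNE_MNE[OF n(1)]] by (simp add: outcome_return)
    thus "z \<in> F \<theta>" using n(2) by blast
  next
    fix z assume "z \<in> F \<theta>"
    thus "z \<in> PNE_outcomes Msg' gn u \<theta>" using good by (auto simp: PNE_outcomes_def)
  qed
  thus ?thesis unfolding mixed_Nash_B_implementable_def by blast
qed

theorem theorem3:
  fixes u :: "'i::finite \<Rightarrow> 'th::countable \<Rightarrow> 'z::finite \<Rightarrow> real"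
    and F :: "'th \<Rightarrow> 'z set"
  assumes "CARD('i) \<ge> 3"
    and "\<And>\<theta>. F \<theta> \<noteq> {}"
  shows "(pure_Nash_implementable u F \<longleftrightarrow> mixed_Nash_A_implementable u F)
       \<and> (mixed_Nash_A_implementable u F \<longleftrightarrow> mixed_Nash_B_implementable u F)"
proof -
  have BA: "mixed_Nash_B_implementable u F \<Longrightarrow> mixed_Nash_A_implementable u F"
    unfolding mixed_Nash_B_implementable_def mixed_Nash_A_implementable_def by blast
  have BP: "mixed_Nash_B_implementable u F \<Longrightarrow> pure_Nash_implementable u F"
    unfolding mixed_Nash_B_implementable_def pure_Nash_implementable_def by blast
  show ?thesis using BA BP pure_imp_B[OF assms(1)] A_imp_pure[of u F] by blast
qed


end
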